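(* Let $\mathcal{H}=\bigotimes_{i=1}^n\mathcal{H}_i$ with $\dim\mathcal{H}_i=d_i$, and let $U$ be a unitary gate on $\mathcal{H}$. Then the entangling power with respect to the $n$-party one-tangle equals $$\epsilon_1(U)=\frac{1}{2^{n-1}-1}\sum_{p|q}\epsilon_{p|q}(U),$$ where the sum is over all non-trivial unordered bipartitions $p|q$ of $\{1,\dots,n\}$, and for each such bipartition $$\epsilon_{p|q}(U)=2\left[1-\Bigg(\prod_{i=1}^n\frac{d_i}{d_i+1}\Bigg)\sum_{x'|y'}\operatorname{tr}\big[(\operatorname{tr}_{px'}|U\rangle\langle U|)^2\big]\right],$$ with the inner sum over all $2^n$ ordered bipartitions $x'|y'$ of $\{1',\dots,n'\}$ (i.e. all subsets $x'$, including $\emptyset$ and the whole set, with $y'$ the complement), and $\operatorname{tr}_{px'}$ the partial trace over the factors $\mathcal{H}_i$, $i\in p$, and $\mathcal{H}_{i'}$, $i'\in x'$.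
   Context: Let $\mathcal{H}'=\bigotimes_{i=1}^n\mathcal{H}_{i'}$ be a copy of $\mathcal{H}$ with $\dim\mathcal{H}_{i'}=d_i$. The state associated with $U$ is $|U\rangle=\frac{1}{\sqrt{d_1\cdots d_n}}\sum\langle j_1\dots j_n|U|j_{1'}\dots j_{n'}\rangle\,|j_1\dots j_n\rangle\otimes|j_{1'}\dots j_{n'}\rangle\in\mathcal{H}\otimes\mathcal{H}'$. For a pure state $|\psi\rangle\in\mathcal{H}$ and a bipartition $p|q$ of $\{1,\dots,n\}$, $\tau_{p|q}(|\psi\rangle)=2\big(1-\operatorname{tr}[(\operatorname{tr}_p|\psi\rangle\langle\psi|)^2]\big)$; the $n$-party one-tangle is $\tau_1=\frac{1}{2^{n-1}-1}\sum_{p|q}\tau_{p|q}$ (sum over non-trivial unordered bipartitions). $\epsilon_{p|q}(U)$ (resp. $\epsilon_1(U)$) is the average of $\tau_{p|q}(U|\psi_{\rm sep}\rangle)$ (resp. $\tau_1(U|\psi_{\rm sep}\rangle)$) over $|\psi_{\rm sep}\rangle=|\psi_1\rangle\otimes\cdots\otimes|\psi_n\rangle$, each $|\psi_i\rangle$ drawn independently from the unitarily invariant measure on pure states of $\mathcal{H}_i$. *)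

theory Defs
  imports "HOL-Probability.Probability"
begin

text \<open>Sites are natural numbers; a configuration of the sites in S with local
dimensions D is an extensional function S -> {..<D i}.  Vectors and operators
on the tensor product are complex-valued functions of configurations.\<close>

definition configs :: "nat set \<Rightarrow> (nat \<Rightarrow> nat) \<Rightarrow> (nat \<Rightarrow> nat) set" where
  "configs S D = PiE S (\<lambda>i. {..<D i})"

definition merge :: "nat set \<Rightarrow> (nat \<Rightarrow> nat) \<Rightarrow> (nat \<Rightarrow> nat) \<Rightarrow> (nat \<Rightarrow> nat)" where
  "merge T c a = (\<lambda>i. if i \<in> T then c i else a i)"

definition proj :: "((nat \<Rightarrow> nat) \<Rightarrow> complex) \<Rightarrow> (nat \<Rightarrow> nat) \<Rightarrow> (nat \<Rightarrow> nat) \<Rightarrow> complex" where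
  "proj \<psi> a b = \<psi> a * cnj (\<psi> b)"

text \<open>partial trace over the sites T (the result acts on the sites S - T)\<close>
definition ptrace :: "(nat \<Rightarrow> nat) \<Rightarrow> nat set \<Rightarrow> ((nat \<Rightarrow> nat) \<Rightarrow> (nat \<Rightarrow> nat) \<Rightarrow> complex)
    \<Rightarrow> (nat \<Rightarrow> nat) \<Rightarrow> (nat \<Rightarrow> nat) \<Rightarrow> complex" where
  "ptrace D T \<rho> = (\<lambda>a b. \<Sum>c\<in>configs T D. \<rho> (merge T c a) (merge T c b))"

definition mtrace :: "'a set \<Rightarrow> ('a \<Rightarrow> 'a \<Rightarrow> complex) \<Rightarrow> complex" where
  "mtrace K M = (\<Sum>a\<in>K. M a a)"

definition mmult :: "'a set \<Rightarrow> ('a \<Rightarrow> 'a \<Rightarrow> complex) \<Rightarrow> ('a \<Rightarrow> 'a \<Rightarrow> complex) \<Rightarrow> 'a \<Rightarrow> 'a \<Rightarrow> complex" where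
  "mmult K M N = (\<lambda>a b. \<Sum>c\<in>K. M a c * N c b)"

definition purity :: "nat set \<Rightarrow> (nat \<Rightarrow> nat) \<Rightarrow> nat set \<Rightarrow> ((nat \<Rightarrow> nat) \<Rightarrow> complex) \<Rightarrow> complex" where
  "purity S D T \<psi> =
     (let \<rho> = ptrace D T (proj \<psi>) in mtrace (configs (S - T) D) (mmult (configs (S - T) D) \<rho> \<rho>))"

definition tau_bip :: "nat \<Rightarrow> (nat \<Rightarrow> nat) \<Rightarrow> nat set \<Rightarrow> ((nat \<Rightarrow> nat) \<Rightarrow> complex) \<Rightarrow> complex" where
  "tau_bip n d p \<psi> = 2 * (1 - purity {..<n} d p \<psi>)"

text \<open>Non-trivial unordered bipartitions p|q of {..<n} (parties 0..n-1), each
represented by the part p not containing party 0: p \<subseteq> {1..<n}, p \<noteq> {}.\<close>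
definition nontriv_bip :: "nat \<Rightarrow> nat set set" where
  "nontriv_bip n = {p. p \<subseteq> {1..<n} \<and> p \<noteq> {}}"

definition tau1 :: "nat \<Rightarrow> (nat \<Rightarrow> nat) \<Rightarrow> ((nat \<Rightarrow> nat) \<Rightarrow> complex) \<Rightarrow> complex" where
  "tau1 n d \<psi> = (1 / (2 ^ (n - 1) - 1)) * (\<Sum>p\<in>nontriv_bip n. tau_bip n d p \<psi>)"

definition unitary_on :: "'a set \<Rightarrow> ('a \<Rightarrow> 'a \<Rightarrow> complex) \<Rightarrow> bool" where
  "unitary_on K V \<longleftrightarrow> (\<forall>a\<in>K. \<forall>b\<in>K. (\<Sum>k\<in>K. cnj (V k a) * V k b) = (if a = b then 1 else 0))"

definition apply_op :: "'a set \<Rightarrow> ('a \<Rightarrow> 'a \<Rightarrow> complex) \<Rightarrow> ('a \<Rightarrow> complex) \<Rightarrow> 'a \<Rightarrow> complex" where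
  "apply_op K V \<psi> = (\<lambda>j. \<Sum>k\<in>K. V j k * \<psi> k)"

definition prod_state :: "nat \<Rightarrow> (nat \<Rightarrow> nat \<Rightarrow> complex) \<Rightarrow> (nat \<Rightarrow> nat) \<Rightarrow> complex" where
  "prod_state n \<psi>s = (\<lambda>j. \<Prod>i<n. \<psi>s i (j i))"

definition vec_space :: "nat \<Rightarrow> (nat \<Rightarrow> complex) measure" where
  "vec_space m = PiM {..<m} (\<lambda>_. (borel :: complex measure))"

text \<open>The unitarily invariant probability measure on pure states (unit vectors) of C^m;
it is unique, so quantifying over all such measures is faithful.\<close>
definition haar_state_measure :: "nat \<Rightarrow> (nat \<Rightarrow> complex) measure \<Rightarrow> bool" where
  "haar_state_measure m \<mu> \<longleftrightarrow>
     sets \<mu> = sets (vec_space m) \<and> prob_space \<mu> \<and>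
     (AE v in \<mu>. (\<Sum>k<m. (cmod (v k))\<^sup>2) = 1) \<and>
     (\<forall>V. unitary_on {..<m} V \<longrightarrow>
        distr \<mu> (vec_space m) (\<lambda>v. restrict (\<lambda>k. \<Sum>l<m. V k l * v l) {..<m}) = \<mu>)"

definition eps_bip :: "nat \<Rightarrow> (nat \<Rightarrow> nat) \<Rightarrow> ((nat \<Rightarrow> nat) \<Rightarrow> (nat \<Rightarrow> nat) \<Rightarrow> complex)
    \<Rightarrow> (nat \<Rightarrow> (nat \<Rightarrow> complex) measure) \<Rightarrow> nat set \<Rightarrow> complex" where
  "eps_bip n d U \<mu> p = (LINT \<psi>s | PiM {..<n} \<mu>.
      tau_bip n d p (apply_op (configs {..<n} d) U (prod_state n \<psi>s)))"

definition eps1 :: "nat \<Rightarrow> (nat \<Rightarrow> nat) \<Rightarrow> ((nat \<Rightarrow> nat) \<Rightarrow> (nat \<Rightarrow> nat) \<Rightarrow> complex)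
    \<Rightarrow> (nat \<Rightarrow> (nat \<Rightarrow> complex) measure) \<Rightarrow> complex" where
  "eps1 n d U \<mu> = (LINT \<psi>s | PiM {..<n} \<mu>.
      tau1 n d (apply_op (configs {..<n} d) U (prod_state n \<psi>s)))"

text \<open>Doubled system H (x) H': sites 0..n-1 are H_1..H_n, sites n..2n-1 are H_1'..H_n'.\<close>
definition dd :: "nat \<Rightarrow> (nat \<Rightarrow> nat) \<Rightarrow> nat \<Rightarrow> nat" where
  "dd n d = (\<lambda>i. if i < n then d i else d (i - n))"

definition choi :: "nat \<Rightarrow> (nat \<Rightarrow> nat) \<Rightarrow> ((nat \<Rightarrow> nat) \<Rightarrow> (nat \<Rightarrow> nat) \<Rightarrow> complex)
    \<Rightarrow> (nat \<Rightarrow> nat) \<Rightarrow> complex" where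
  "choi n d U = (\<lambda>k. U (restrict k {..<n}) (restrict (\<lambda>i. k (i + n)) {..<n})
                     / complex_of_real (sqrt (real (\<Prod>i<n. d i))))"

end

theory Submission
  imports Defs
begin


definition mom :: "(nat \<Rightarrow> complex) measure \<Rightarrow> nat \<Rightarrow> nat \<Rightarrow> nat \<Rightarrow> nat \<Rightarrow> complex" where
  "mom \<mu> a b c e = (LINT v|\<mu>. v a * cnj (v b) * v c * cnj (v e))"

lemma borel_measurable_cnj[measurable]:
  "f \<in> borel_measurable M \<Longrightarrow> (\<lambda>x. cnj (f x)) \<in> borel_measurable M"
  by (rule measurable_compose[OF _ borel_measurable_continuous_onI[OF continuous_on_cnj[OF continuous_on_id]]])

lemma if0_mult: "(if P then x else 0) * y = (if P then x * y else (0::'a::mult_zero))"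
  "y * (if P then x else 0) = (if P then y * x else (0::'a))" by auto

locale haar = fixes m and \<mu> assumes H: "haar_state_measure m \<mu>"
begin

lemma sets_mu: "sets \<mu> = sets (vec_space m)" using H unfolding haar_state_measure_def by auto
lemma space_mu: "space \<mu> = space (vec_space m)" using sets_eq_imp_space_eq[OF sets_mu] .
lemma prob: "prob_space \<mu>" using H unfolding haar_state_measure_def by auto
lemma AEnorm: "AE v in \<mu>. (\<Sum>k<m. (cmod (v k))\<^sup>2) = 1" using H unfolding haar_state_measure_def by auto

lemma meas_cong: "measurable \<mu> N = measurable (vec_space m) N"
  by (rule measurable_cong_sets[OF sets_mu refl])

lemma comp_meas[measurable]: "a < m \<Longrightarrow> (\<lambda>v. v a) \<in> borel_measurable (vec_space m)"
  unfolding vec_space_def by (rule measurable_component_singleton) auto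

lemma comp_meas_mu: "a < m \<Longrightarrow> (\<lambda>v. v a) \<in> borel_measurable \<mu>"
  using comp_meas[of a] by (simp add: meas_cong)

lemma AE_le1: "AE v in \<mu>. \<forall>a<m. cmod (v a) \<le> 1"
  using AEnorm
proof (rule AE_mp, intro AE_I2 impI allI)
  fix v a assume s: "(\<Sum>k<m. (cmod (v k))\<^sup>2) = 1" and a: "a < m"
  have "(cmod (v a))\<^sup>2 \<le> (\<Sum>k<m. (cmod (v k))\<^sup>2)"
    by (rule member_le_sum) (use a in auto)
  then have "(cmod (v a))\<^sup>2 \<le> 1\<^sup>2" using s by simp
  then show "cmod (v a) \<le> 1" by (rule power2_le_imp_le) simp
qed

lemma mono_meas: "a<m \<Longrightarrow> b<m \<Longrightarrow> c<m \<Longrightarrow> e<m \<Longrightarrow>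
   (\<lambda>v. v a * cnj (v b) * v c * cnj (v e)) \<in> borel_measurable (vec_space m)"
  using comp_meas[of a] comp_meas[of b] comp_meas[of c] comp_meas[of e]
  by (intro borel_measurable_times borel_measurable_cnj) auto

lemma mono_int: assumes "a<m" "b<m" "c<m" "e<m"
  shows "integrable \<mu> (\<lambda>v. v a * cnj (v b) * v c * cnj (v e))"
proof -
  interpret prob_space \<mu> by (rule prob)
  show ?thesis
  proof (rule integrable_const_bound[where B=1])
    show "AE x in \<mu>. norm (x a * cnj (x b) * x c * cnj (x e)) \<le> 1"
      using AE_le1 proof (rule AE_mp, intro AE_I2 impI)
      fix v assume "\<forall>a<m. cmod (v a) \<le> 1"
      then have h: "cmod (v a) \<le> 1" "cmod (v b) \<le> 1" "cmod (v c) \<le> 1" "cmod (v e) \<le> 1" using assms by auto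
      show "norm (v a * cnj (v b) * v c * cnj (v e)) \<le> 1"
        unfolding norm_mult complex_mod_cnj using h
        by (intro mult_le_one) (auto intro: mult_le_one)
    qed
    show "(\<lambda>v. v a * cnj (v b) * v c * cnj (v e)) \<in> borel_measurable \<mu>"
      using mono_meas[OF assms] meas_cong by auto
  qed
qed

definition T :: "(nat \<Rightarrow> nat \<Rightarrow> complex) \<Rightarrow> (nat \<Rightarrow> complex) \<Rightarrow> nat \<Rightarrow> complex" where
  "T V v = restrict (\<lambda>k. \<Sum>l<m. V k l * v l) {..<m}"

lemma T_meas: "T V \<in> measurable (vec_space m) (vec_space m)"
  unfolding T_def by (subst (2) vec_space_def, rule measurable_restrict) measurable

lemma inv: fixes f :: "_ \<Rightarrow> complex" assumes V: "unitary_on {..<m} V" and f: "f \<in> borel_measurable (vec_space m)"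
  shows "integral\<^sup>L \<mu> f = integral\<^sup>L \<mu> (\<lambda>v. f (T V v))"
proof -
  have eq: "distr \<mu> (vec_space m) (T V) = \<mu>" using H V unfolding haar_state_measure_def T_def by auto
  have Tm: "T V \<in> measurable \<mu> (vec_space m)" using T_meas meas_cong by auto
  have "integral\<^sup>L \<mu> f = integral\<^sup>L (distr \<mu> (vec_space m) (T V)) f" by (simp add: eq)
  also have "\<dots> = integral\<^sup>L \<mu> (\<lambda>v. f (T V v))" by (rule integral_distr[OF Tm f])
  finally show ?thesis .
qed

lemma T_apply: "a < m \<Longrightarrow> T V v a = (\<Sum>l<m. V a l * v l)" by (simp add: T_def)

lemma mom_inv: assumes V: "unitary_on {..<m} V" "a<m" "b<m" "c<m" "e<m"
  shows "mom \<mu> a b c e = (LINT v|\<mu>. (\<Sum>l<m. V a l * v l) * cnj (\<Sum>l<m. V b l * v l) * (\<Sum>l<m. V c l * v l) * cnj (\<Sum>l<m. V e l * v l))"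
  unfolding mom_def by (subst inv[OF V(1) mono_meas[OF V(2-5)]]) (simp add: T_apply assms)

definition ph :: "nat \<Rightarrow> nat \<Rightarrow> complex" where "ph r k = (if k = r then \<i> else 1)"

lemma phase_unitary: "unitary_on {..<m} (\<lambda>k l. if k = l then ph r k else 0)"
  unfolding unitary_on_def by (auto simp: ph_def if0_mult if_distrib[of cnj])

lemma factor_ne: "\<not>((a=b\<and>c=e)\<or>(a=e\<and>c=b)) \<Longrightarrow>
  \<exists>r. ph r a * cnj (ph r b) * ph r c * cnj (ph r e) \<noteq> 1"
  apply (cases "ph a a * cnj (ph a b) * ph a c * cnj (ph a e) \<noteq> 1", blast)
  apply (cases "ph b a * cnj (ph b b) * ph b c * cnj (ph b e) \<noteq> 1", blast)
  apply (cases "ph c a * cnj (ph c b) * ph c c * cnj (ph c e) \<noteq> 1", blast)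
  apply (auto simp: ph_def split: if_splits)
  done

lemma mom_zero: assumes "a<m" "b<m" "c<m" "e<m" "\<not>((a=b\<and>c=e)\<or>(a=e\<and>c=b))"
  shows "mom \<mu> a b c e = 0"
proof -
  have key: "mom \<mu> a b c e = (ph r a * cnj (ph r b) * ph r c * cnj (ph r e)) * mom \<mu> a b c e" for r
  proof -
    have s: "(\<Sum>l<m. (if x = l then ph r x else 0) * v l) = ph r x * v x" if "x < m" for x v
      using that by (simp add: if0_mult)
    have "mom \<mu> a b c e = (LINT v|\<mu>. (ph r a * v a) * cnj (ph r b * v b) * (ph r c * v c) * cnj (ph r e * v e))"
      using mom_inv[OF phase_unitary[of r] assms(1-4)] s assms by simp
    also have "\<dots> = (LINT v|\<mu>. (ph r a * cnj (ph r b) * ph r c * cnj (ph r e)) * (v a * cnj (v b) * v c * cnj (v e)))"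
      by (simp add: algebra_simps)
    also have "\<dots> = (ph r a * cnj (ph r b) * ph r c * cnj (ph r e)) * mom \<mu> a b c e"
      unfolding mom_def by (rule integral_mult_right_zero)
    finally show ?thesis .
  qed
  obtain r where "ph r a * cnj (ph r b) * ph r c * cnj (ph r e) \<noteq> 1" using factor_ne[OF assms(5)] by blast
  with key[of r] show ?thesis
    by (metis mult_cancel_right2)
qed

lemma mom_sym1: "mom \<mu> a b c e = mom \<mu> c b a e"
  unfolding mom_def by (simp add: mult_ac)
lemma mom_sym2: "mom \<mu> a b c e = mom \<mu> a e c b"
  unfolding mom_def by (simp add: mult_ac)

definition R :: "nat \<Rightarrow> nat \<Rightarrow> nat \<Rightarrow> nat \<Rightarrow> complex" where
  "R a c k l = (if k = a then (if l = a then 3/5 else if l = c then 4/5 else 0)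
     else if k = c then (if l = a then -4/5 else if l = c then 3/5 else 0)
     else if k = l then 1 else 0)"

lemma rot_unitary: assumes "a<m" "c<m" "a\<noteq>c" shows "unitary_on {..<m} (R a c)"
  unfolding unitary_on_def
proof (intro ballI)
  fix x y assume x: "x \<in> {..<m}" and y: "y \<in> {..<m}"
  let ?F = "\<lambda>k. cnj (R a c k x) * R a c k y"
  have U: "{..<m} = insert a (insert c ({..<m}-{a,c}))" using assms by auto
  have "(\<Sum>k<m. ?F k) = ?F a + ?F c + (\<Sum>k\<in>{..<m}-{a,c}. ?F k)"
    by (subst U) (simp add: assms)
  also have "(\<Sum>k\<in>{..<m}-{a,c}. ?F k) = (\<Sum>k\<in>{..<m}-{a,c}. if k = x then (if k = y then 1 else 0) else 0)"
    by (rule sum.cong) (auto simp: R_def)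
  also have "\<dots> = (if x = y \<and> x \<notin> {a,c} then 1 else 0)"
    using x by (simp add: if0_mult)
  finally show "(\<Sum>k<m. ?F k) = (if x = y then 1 else 0)"
    using assms by (auto simp: R_def)
qed

lemma sum_two: fixes x y :: complex and v :: "nat \<Rightarrow> complex" assumes "a<m" "c<m" "a\<noteq>c"
  shows "(\<Sum>l<m. (if l = a then x else if l = c then y else 0) * v l) = x * v a + y * v c"
proof -
  have "(\<Sum>l<m. (if l = a then x else if l = c then y else 0) * v l) =
     (\<Sum>l<m. (if l = a then x * v a else 0) + (if l = c then y * v c else 0))"
    by (rule sum.cong) (use assms in simp_all)
  also have "\<dots> = x * v a + y * v c" using assms by (simp add: sum.distrib)
  finally show ?thesis .
qed

lemma int_sum4: assumes J: "J \<subseteq> {..<m}" "finite J"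
  shows "(LINT v|\<mu>. (\<Sum>i1\<in>J. \<Sum>i2\<in>J. \<Sum>i3\<in>J. \<Sum>i4\<in>J. C i1 i2 i3 i4 * (v i1 * cnj (v i2) * v i3 * cnj (v i4))))
    = (\<Sum>i1\<in>J. \<Sum>i2\<in>J. \<Sum>i3\<in>J. \<Sum>i4\<in>J. C i1 i2 i3 i4 * mom \<mu> i1 i2 i3 i4)"
proof -
  have I: "integrable \<mu> (\<lambda>v. C i1 i2 i3 i4 * (v i1 * cnj (v i2) * v i3 * cnj (v i4)))"
    if "i1 \<in> J" "i2 \<in> J" "i3 \<in> J" "i4 \<in> J" for i1 i2 i3 i4
    using that J by (intro integrable_mult_right mono_int) auto
  show ?thesis unfolding mom_def
    by (simp add: integral_sum integrable_sum I)
qed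

lemma int_sum2: assumes J: "J \<subseteq> {..<m}" "finite J"
  shows "(LINT v|\<mu>. (\<Sum>i1\<in>J. \<Sum>i3\<in>J. v i1 * cnj (v i1) * v i3 * cnj (v i3)))
    = (\<Sum>i1\<in>J. \<Sum>i3\<in>J. LINT v|\<mu>. v i1 * cnj (v i1) * v i3 * cnj (v i3))"
proof -
  have I: "integrable \<mu> (\<lambda>v. v i1 * cnj (v i1) * v i3 * cnj (v i3))"
    if "i1 \<in> J" "i3 \<in> J" for i1 i3
    using that J by (intro mono_int) auto
  show ?thesis by (simp add: integral_sum integrable_sum I)
qed

lemma rot_eq: assumes "a<m" "c<m" "a\<noteq>c"
  shows "625 * mom \<mu> a a a a = 81 * mom \<mu> a a a a + 256 * mom \<mu> c c c c + 576 * mom \<mu> a a c c"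
proof -
  define co where "co i = (if i = a then 3/5 else (4/5::complex))" for i
  have row: "(\<Sum>l<m. R a c a l * v l) = (\<Sum>i\<in>{a,c}. co i * v i)" for v
    using sum_two[OF assms, of "3/5" "4/5" v] assms by (simp add: R_def co_def)
  have exp: "(\<Sum>i\<in>{a,c}. co i * v i) * cnj (\<Sum>i\<in>{a,c}. co i * v i) * (\<Sum>i\<in>{a,c}. co i * v i) * cnj (\<Sum>i\<in>{a,c}. co i * v i)
     = (\<Sum>i1\<in>{a,c}. \<Sum>i2\<in>{a,c}. \<Sum>i3\<in>{a,c}. \<Sum>i4\<in>{a,c}. (co i1 * co i2 * co i3 * co i4) * (v i1 * cnj (v i2) * v i3 * cnj (v i4)))" for v
    using assms by (simp add: co_def field_simps)
  have ac: "i \<in> {a,c} \<Longrightarrow> i < m" for i using assms by auto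
  have "mom \<mu> a a a a = (LINT v|\<mu>. (\<Sum>i1\<in>{a,c}. \<Sum>i2\<in>{a,c}. \<Sum>i3\<in>{a,c}. \<Sum>i4\<in>{a,c}. (co i1 * co i2 * co i3 * co i4) * (v i1 * cnj (v i2) * v i3 * cnj (v i4))))"
    using mom_inv[OF rot_unitary[OF assms] assms(1) assms(1) assms(1) assms(1)] by (simp only: row exp)
  also have "\<dots> = (\<Sum>i1\<in>{a,c}. \<Sum>i2\<in>{a,c}. \<Sum>i3\<in>{a,c}. \<Sum>i4\<in>{a,c}. (co i1 * co i2 * co i3 * co i4) * mom \<mu> i1 i2 i3 i4)"
    by (rule int_sum4) (use assms in auto)
  also have "\<dots> = (81/625) * mom \<mu> a a a a + (256/625) * mom \<mu> c c c c + (576/625) * mom \<mu> a a c c"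
    using assms mom_sym1[of c c a a] mom_sym2[of c c a a] mom_sym1[of c a a c] mom_sym2[of a c c a]
    by (simp add: co_def mom_zero)
  finally show ?thesis by (simp add: field_simps)
qed

lemma alpha_beta: assumes "a<m" "c<m" "a\<noteq>c"
  shows "mom \<mu> a a a a = mom \<mu> c c c c" "mom \<mu> a a a a = 2 * mom \<mu> a a c c"
proof -
  have s: "mom \<mu> c c a a = mom \<mu> a a c c"
    using mom_sym1[of c c a a] mom_sym2[of a c c a] by simp
  define A where "A = mom \<mu> a a a a"
  define C where "C = mom \<mu> c c c c"
  define B where "B = mom \<mu> a a c c"
  have e1: "625 * A = 81 * A + 256 * C + 576 * B" using rot_eq[OF assms] unfolding A_def B_def C_def .
  have e2: "625 * C = 81 * C + 256 * A + 576 * B" using rot_eq[of c a] assms s unfolding A_def B_def C_def by auto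
  have "800 * (A - C) = (625 * A - (81 * A + 256 * C + 576 * B)) - (625 * C - (81 * C + 256 * A + 576 * B))"
    by (simp add: algebra_simps)
  also have "\<dots> = 0" using e1 e2 by simp
  finally have AC: "A = C" by simp
  show "mom \<mu> a a a a = mom \<mu> c c c c" using AC unfolding A_def C_def .
  have "288 * (A - 2 * B) = (625 * A - (81 * A + 256 * C + 576 * B))"
    using AC by (simp add: algebra_simps)
  also have "\<dots> = 0" using e1 by simp
  finally show "mom \<mu> a a a a = 2 * mom \<mu> a a c c" unfolding A_def B_def by simp
qed

lemma norm_eq: "(\<Sum>a<m. \<Sum>c<m. mom \<mu> a a c c) = 1"
proof -
  interpret prob_space \<mu> by (rule prob)
  have I: "integrable \<mu> (\<lambda>v. v a * cnj (v a) * v c * cnj (v c))" if "a\<in>{..<m}" "c\<in>{..<m}" for a c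
    using that by (intro mono_int) auto
  have "(\<Sum>a<m. \<Sum>c<m. mom \<mu> a a c c) = (LINT v|\<mu>. (\<Sum>a<m. \<Sum>c<m. v a * cnj (v a) * v c * cnj (v c)))"
    unfolding mom_def by (rule int_sum2[symmetric]) auto
  also have "\<dots> = (LINT v|\<mu>. 1)"
  proof (rule integral_cong_AE)
    show "(\<lambda>v. \<Sum>a<m. \<Sum>c<m. v a * cnj (v a) * v c * cnj (v c)) \<in> borel_measurable \<mu>"
      using I by (intro borel_measurable_sum) (auto intro: borel_measurable_integrable)
    show "(\<lambda>v. 1::complex) \<in> borel_measurable \<mu>" by simp
    show "AE v in \<mu>. (\<Sum>a<m. \<Sum>c<m. v a * cnj (v a) * v c * cnj (v c)) = 1"
      using AEnorm proof (rule AE_mp, intro AE_I2 impI)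
      fix v :: "nat \<Rightarrow> complex" assume h: "(\<Sum>k<m. (cmod (v k))\<^sup>2) = 1"
      have "(\<Sum>k<m. v k * cnj (v k)) = of_real (\<Sum>k<m. (cmod (v k))\<^sup>2)"
        by (simp only: of_real_sum complex_norm_square)
      then have h1: "(\<Sum>k<m. v k * cnj (v k)) = 1" using h by simp
      have "(\<Sum>a<m. \<Sum>c<m. v a * cnj (v a) * v c * cnj (v c)) = (\<Sum>k<m. v k * cnj (v k)) * (\<Sum>k<m. v k * cnj (v k))"
        by (simp add: sum_product mult.assoc)
      then show "(\<Sum>a<m. \<Sum>c<m. v a * cnj (v a) * v c * cnj (v c)) = 1" using h1 by simp
    qed
  qed
  also have "\<dots> = 1" by (simp add: prob_space)
  finally show ?thesis .
qed

lemma moment: assumes "a<m" "b<m" "c<m" "e<m"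
  shows "mom \<mu> a b c e = ((if a=b \<and> c=e then 1 else 0) + (if a=e \<and> c=b then 1 else 0)) / (of_nat m * (of_nat m + 1))"
proof -
  define \<alpha> where "\<alpha> = mom \<mu> 0 0 0 0"
  have m0: "0 < m" using assms by simp
  have al: "mom \<mu> x x x x = \<alpha>" if "x < m" for x
  proof (cases "x = 0")
    case True then show ?thesis by (simp add: \<alpha>_def)
  next
    case False then show ?thesis using alpha_beta(1)[OF that m0 False] by (simp add: \<alpha>_def)
  qed
  have be: "mom \<mu> x x y y = (if x = y then \<alpha> else \<alpha>/2)" if "x<m" "y<m" for x y
  proof (cases "x = y")
    case True then show ?thesis using al[OF that(1)] by simp
  next
    case False then show ?thesis using alpha_beta(2)[OF that False] al[OF that(1)] by simp
  qed
  have "1 = (\<Sum>x<m. \<Sum>y<m. mom \<mu> x x y y)" using norm_eq by simp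
  also have "\<dots> = (\<Sum>x<m. \<Sum>y<m. \<alpha>/2 + (if x = y then \<alpha>/2 else 0))"
    by (intro sum.cong refl) (simp add: be)
  also have "\<dots> = of_nat m * (of_nat m * (\<alpha>/2) + \<alpha>/2)"
    by (simp add: sum.distrib)
  finally have n: "1 = of_nat m * (of_nat m * (\<alpha>/2) + \<alpha>/2)" .
  have "(of_nat m * (of_nat m + 1) :: complex) = of_nat (m * (m+1))" by (simp add: distrib_left)
  moreover have "m * (m+1) \<noteq> 0" using m0 by simp
  ultimately have nz: "of_nat m * (of_nat m + 1) \<noteq> (0::complex)" by (simp only: of_nat_eq_0_iff) simp
  have "of_nat m * (of_nat m + 1) * \<alpha> = (2::complex)"
  proof -
    have "of_nat m * (of_nat m + 1) * \<alpha> = 2 * (of_nat m * (of_nat m * (\<alpha>/2) + \<alpha>/2))"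
      by (simp add: field_simps)
    also have "\<dots> = 2 * 1" by (simp only: n[symmetric])
    finally show ?thesis by simp
  qed
  then have \<alpha>v: "\<alpha> = 2 / (of_nat m * (of_nat m + 1))" using nz
    by (subst eq_divide_eq) (simp add: mult.commute)
  show ?thesis
  proof (cases "(a=b \<and> c=e) \<or> (a=e \<and> c=b)")
    case False
    have f1: "(if a=b \<and> c=e then 1 else 0) = (0::complex)" using False by (intro if_not_P) blast
    have f2: "(if a=e \<and> c=b then 1 else 0) = (0::complex)" using False by (intro if_not_P) blast
    show ?thesis by (simp only: f1 f2 mom_zero[OF assms False]) simp
  next
    case True
    have "mom \<mu> a b c e = mom \<mu> a a c c"
    proof (rule disjE[OF True])
      assume "a = b \<and> c = e" then show ?thesis by simp
    next
      assume h: "a = e \<and> c = b"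
      then have "b = c" "e = a" by auto
      then show ?thesis by (simp only:) (rule mom_sym2)
    qed
    also have "\<dots> = (if a = c then \<alpha> else \<alpha>/2)" using be[of a c] assms by simp
    finally have M: "mom \<mu> a b c e = (if a = c then \<alpha> else \<alpha>/2)" .
    show ?thesis
    proof (cases "a = c")
      case True
      with \<open>(a=b \<and> c=e) \<or> (a=e \<and> c=b)\<close> have "a = b \<and> c = e \<and> a = e \<and> c = b" by metis
      then show ?thesis using M \<alpha>v True by simp
    next
      case False
      with \<open>(a=b \<and> c=e) \<or> (a=e \<and> c=b)\<close> have "(if a=b \<and> c=e then 1 else 0) + (if a=e \<and> c=b then 1 else 0) = (1::complex)"
        by auto
      then show ?thesis using M \<alpha>v False by simp
    qed
  qed
qed

end



lemma configs_finite: "finite S \<Longrightarrow> finite (configs S D)"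
  unfolding configs_def by (intro finite_PiE) auto

lemma merge_in: "T \<subseteq> S \<Longrightarrow> c \<in> configs T D \<Longrightarrow> a \<in> configs (S - T) D \<Longrightarrow> merge T c a \<in> configs S D"
  unfolding configs_def merge_def by (auto simp: PiE_iff extensional_def)

lemma merge_in2: "T \<subseteq> S \<Longrightarrow> c \<in> configs S D \<Longrightarrow> a \<in> configs S D \<Longrightarrow> merge T c a \<in> configs S D"
  unfolding configs_def merge_def by (auto simp: PiE_iff extensional_def)

lemma merge_merge: "merge T (merge T c a) (merge T c' b) = merge T c b"
  unfolding merge_def by auto

lemma merge_bij: assumes "T \<subseteq> S"
  shows "bij_betw (\<lambda>(c,a). merge T c a) (configs T D \<times> configs (S - T) D) (configs S D)"
proof (rule bij_betw_imageI)
  show "inj_on (\<lambda>(c,a). merge T c a) (configs T D \<times> configs (S - T) D)"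
  proof (rule inj_onI, clarsimp)
    fix c a c' a' assume c: "c \<in> configs T D" "c' \<in> configs T D" and a: "a \<in> configs (S-T) D" "a' \<in> configs (S-T) D"
      and e: "merge T c a = merge T c' a'"
    have "c i = c' i \<and> a i = a' i" for i
    proof -
      have "merge T c a i = merge T c' a' i" using e by simp
      then show ?thesis using c a unfolding configs_def merge_def
        by (cases "i \<in> T"; cases "i \<in> S") (auto simp: PiE_iff extensional_def)
    qed
    then show "c = c' \<and> a = a'" by (auto simp: fun_eq_iff)
  qed
  show "(\<lambda>(c,a). merge T c a) ` (configs T D \<times> configs (S - T) D) = configs S D"
  proof
    show "(\<lambda>(c,a). merge T c a) ` (configs T D \<times> configs (S - T) D) \<subseteq> configs S D"
      using merge_in[OF assms] by auto
    show "configs S D \<subseteq> (\<lambda>(c,a). merge T c a) ` (configs T D \<times> configs (S - T) D)"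
    proof
      fix g assume g: "g \<in> configs S D"
      have "g = merge T (restrict g T) (restrict g (S - T))"
        using g assms unfolding configs_def merge_def by (auto simp: PiE_iff extensional_def fun_eq_iff)
      moreover have "restrict g T \<in> configs T D" "restrict g (S - T) \<in> configs (S - T) D"
        using g assms unfolding configs_def by (auto simp: PiE_iff)
      ultimately show "g \<in> (\<lambda>(c,a). merge T c a) ` (configs T D \<times> configs (S - T) D)"
        by (intro image_eqI[where x="(restrict g T, restrict g (S - T))"]) auto
    qed
  qed
qed

lemma sum_merge: assumes "T \<subseteq> S" "finite S"
  shows "(\<Sum>c\<in>configs T D. \<Sum>a\<in>configs (S - T) D. f (merge T c a)) = (\<Sum>g\<in>configs S D. f g)"
proof -
  have fin: "finite (configs T D)" "finite (configs (S - T) D)"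
    using assms by (auto intro: configs_finite finite_subset)
  have "(\<Sum>c\<in>configs T D. \<Sum>a\<in>configs (S - T) D. f (merge T c a)) =
      (\<Sum>x\<in>configs T D \<times> configs (S - T) D. f ((\<lambda>(c,a). merge T c a) x))"
    using fin by (simp add: sum.cartesian_product prod.case_distrib)
  also have "\<dots> = (\<Sum>g\<in>configs S D. f g)"
    by (rule sum.reindex_bij_betw[OF merge_bij[OF assms(1)]])
  finally show ?thesis .
qed

lemma purity_alt: assumes "T \<subseteq> S" "finite S"
  shows "purity S D T \<psi> = (\<Sum>g1\<in>configs S D. \<Sum>g2\<in>configs S D.
     \<psi> g1 * cnj (\<psi> (merge T g1 g2)) * \<psi> g2 * cnj (\<psi> (merge T g2 g1)))"
proof -
  let ?A = "configs (S - T) D" and ?C = "configs T D"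
  let ?F = "\<lambda>g1 g2. \<psi> g1 * cnj (\<psi> (merge T g1 g2)) * \<psi> g2 * cnj (\<psi> (merge T g2 g1))"
  have finA: "finite ?A" and finC: "finite ?C" using assms by (auto intro: configs_finite finite_subset)
  have "purity S D T \<psi> = (\<Sum>a\<in>?A. \<Sum>b\<in>?A. (\<Sum>c\<in>?C. \<psi> (merge T c a) * cnj (\<psi> (merge T c b))) *
                                          (\<Sum>c'\<in>?C. \<psi> (merge T c' b) * cnj (\<psi> (merge T c' a))))"
    unfolding purity_def ptrace_def mtrace_def mmult_def proj_def Let_def by simp
  also have "\<dots> = (\<Sum>a\<in>?A. \<Sum>b\<in>?A. \<Sum>c\<in>?C. \<Sum>c'\<in>?C. \<psi> (merge T c a) * cnj (\<psi> (merge T c b)) *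
                                          (\<psi> (merge T c' b) * cnj (\<psi> (merge T c' a))))"
    by (simp add: sum_product)
  also have "\<dots> = (\<Sum>a\<in>?A. \<Sum>c\<in>?C. \<Sum>b\<in>?A. \<Sum>c'\<in>?C. \<psi> (merge T c a) * cnj (\<psi> (merge T c b)) *
                                          (\<psi> (merge T c' b) * cnj (\<psi> (merge T c' a))))"
    by (rule sum.cong[OF refl], rule sum.swap)
  also have "\<dots> = (\<Sum>c\<in>?C. \<Sum>a\<in>?A. \<Sum>b\<in>?A. \<Sum>c'\<in>?C. \<psi> (merge T c a) * cnj (\<psi> (merge T c b)) *
                                          (\<psi> (merge T c' b) * cnj (\<psi> (merge T c' a))))"
    by (rule sum.swap)
  also have "\<dots> = (\<Sum>c\<in>?C. \<Sum>a\<in>?A. \<Sum>c'\<in>?C. \<Sum>b\<in>?A. \<psi> (merge T c a) * cnj (\<psi> (merge T c b)) *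
                                          (\<psi> (merge T c' b) * cnj (\<psi> (merge T c' a))))"
    by (rule sum.cong[OF refl], rule sum.cong[OF refl], rule sum.swap)
  also have "\<dots> = (\<Sum>c\<in>?C. \<Sum>a\<in>?A. \<Sum>c'\<in>?C. \<Sum>b\<in>?A. ?F (merge T c a) (merge T c' b))"
    by (simp add: merge_merge mult_ac)
  also have "\<dots> = (\<Sum>c\<in>?C. \<Sum>a\<in>?A. \<Sum>g2\<in>configs S D. ?F (merge T c a) g2)"
    by (intro sum.cong refl sum_merge assms)
  also have "\<dots> = (\<Sum>g1\<in>configs S D. \<Sum>g2\<in>configs S D. ?F g1 g2)"
    by (rule sum_merge[OF assms, where f="\<lambda>g1. \<Sum>g2\<in>configs S D. ?F g1 g2"])
  finally show ?thesis .
qed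

definition join :: "nat \<Rightarrow> (nat \<Rightarrow> nat) \<Rightarrow> (nat \<Rightarrow> nat) \<Rightarrow> nat \<Rightarrow> nat" where
  "join n j k = (\<lambda>i. if i < n then j i else if i < 2*n then k (i - n) else undefined)"

lemma join_in: "j \<in> configs {..<n} d \<Longrightarrow> k \<in> configs {..<n} d \<Longrightarrow> join n j k \<in> configs {..<2*n} (dd n d)"
  unfolding configs_def join_def dd_def by (auto simp: PiE_iff extensional_def)

lemma join_bij: "bij_betw (\<lambda>(j,k). join n j k) (configs {..<n} d \<times> configs {..<n} d) (configs {..<2*n} (dd n d))"
proof (rule bij_betw_imageI)
  show "inj_on (\<lambda>(j,k). join n j k) (configs {..<n} d \<times> configs {..<n} d)"
  proof (rule inj_onI, clarsimp)
    fix j k j' k' assume h: "j \<in> configs {..<n} d" "k \<in> configs {..<n} d" "j' \<in> configs {..<n} d" "k' \<in> configs {..<n} d"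
      and e: "join n j k = join n j' k'"
    have "j i = j' i \<and> k i = k' i" for i
    proof -
      have "join n j k i = join n j' k' i" "join n j k (i+n) = join n j' k' (i+n)" using e by auto
      then show ?thesis using h unfolding configs_def join_def
        by (cases "i < n") (auto simp: PiE_iff extensional_def)
    qed
    then show "j = j' \<and> k = k'" by (auto simp: fun_eq_iff)
  qed
  show "(\<lambda>(j,k). join n j k) ` (configs {..<n} d \<times> configs {..<n} d) = configs {..<2*n} (dd n d)"
  proof
    show "(\<lambda>(j,k). join n j k) ` (configs {..<n} d \<times> configs {..<n} d) \<subseteq> configs {..<2*n} (dd n d)"
      using join_in by auto
    show "configs {..<2*n} (dd n d) \<subseteq> (\<lambda>(j,k). join n j k) ` (configs {..<n} d \<times> configs {..<n} d)"
    proof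
      fix g assume g: "g \<in> configs {..<2*n} (dd n d)"
      let ?j = "restrict g {..<n}" and ?k = "restrict (\<lambda>i. g (i + n)) {..<n}"
      have gj: "g = join n ?j ?k"
        using g unfolding configs_def join_def by (auto simp: PiE_iff extensional_def fun_eq_iff)
      have hg: "g i < dd n d i" if "i < 2*n" for i using g that unfolding configs_def by (auto simp: PiE_iff)
      have "g i < d i" if "i < n" for i using hg[of i] that by (simp add: dd_def)
      moreover have "g (i+n) < d i" if "i < n" for i using hg[of "i+n"] that by (simp add: dd_def)
      ultimately have "?j \<in> configs {..<n} d" "?k \<in> configs {..<n} d"
        unfolding configs_def by (auto simp: PiE_iff)
      then show "g \<in> (\<lambda>(j,k). join n j k) ` (configs {..<n} d \<times> configs {..<n} d)"
        using gj by (intro image_eqI[where x="(?j, ?k)"]) auto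
    qed
  qed
qed

lemma sum_join: "(\<Sum>g\<in>configs {..<2*n} (dd n d). f g) = (\<Sum>j\<in>configs {..<n} d. \<Sum>k\<in>configs {..<n} d. f (join n j k))"
proof -
  have fin: "finite (configs {..<n} d)" by (rule configs_finite) simp
  have "(\<Sum>j\<in>configs {..<n} d. \<Sum>k\<in>configs {..<n} d. f (join n j k)) =
      (\<Sum>x\<in>configs {..<n} d \<times> configs {..<n} d. f ((\<lambda>(j,k). join n j k) x))"
    using fin by (simp add: sum.cartesian_product prod.case_distrib)
  also have "\<dots> = (\<Sum>g\<in>configs {..<2*n} (dd n d). f g)"
    by (rule sum.reindex_bij_betw[OF join_bij])
  finally show ?thesis by simp
qed

lemma choi_join: assumes "j \<in> configs {..<n} d" "k \<in> configs {..<n} d"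
  shows "choi n d U (join n j k) = U j k / complex_of_real (sqrt (real (\<Prod>i<n. d i)))"
proof -
  have "restrict (join n j k) {..<n} = j" using assms(1) unfolding configs_def join_def
    by (auto simp: PiE_iff extensional_def fun_eq_iff)
  moreover have "restrict (\<lambda>i. join n j k (i + n)) {..<n} = k" using assms(2) unfolding configs_def join_def
    by (auto simp: PiE_iff extensional_def fun_eq_iff)
  ultimately show ?thesis unfolding choi_def by simp
qed

lemma merge_join: assumes "p \<subseteq> {..<n}" "X \<subseteq> {..<n}"
  shows "merge (p \<union> (\<lambda>i. i + n) ` X) (join n j1 k1) (join n j2 k2) = join n (merge p j1 j2) (merge X k1 k2)"
proof (rule ext)
  fix i
  show "merge (p \<union> (\<lambda>i. i + n) ` X) (join n j1 k1) (join n j2 k2) i = join n (merge p j1 j2) (merge X k1 k2) i"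
  proof (cases "i < n")
    case True
    then have "i \<notin> (\<lambda>i. i + n) ` X" by auto
    then show ?thesis using True unfolding merge_def join_def by auto
  next
    case False
    then have "i \<notin> p" using assms by auto
    moreover have "i \<in> (\<lambda>i. i + n) ` X \<longleftrightarrow> i - n \<in> X" using False by force
    moreover have "i - n \<in> X \<Longrightarrow> i < 2 * n" using assms False by auto
    ultimately show ?thesis using False unfolding merge_def join_def by auto
  qed
qed

lemma purity_choi: assumes "p \<subseteq> {..<n}" "X \<subseteq> {..<n}"
  shows "purity {..<2*n} (dd n d) (p \<union> (\<lambda>i. i + n) ` X) (choi n d U) =
    (\<Sum>j1\<in>configs {..<n} d. \<Sum>j2\<in>configs {..<n} d. \<Sum>k1\<in>configs {..<n} d. \<Sum>k2\<in>configs {..<n} d.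
       U j1 k1 * cnj (U (merge p j1 j2) (merge X k1 k2)) * U j2 k2 * cnj (U (merge p j2 j1) (merge X k2 k1)))
     / (of_nat (\<Prod>i<n. d i))^2"
proof -
  let ?K = "configs {..<n} d" and ?T = "p \<union> (\<lambda>i. i + n) ` X"
  define s where "s = complex_of_real (sqrt (real (\<Prod>i<n. d i)))"
  have cs: "cnj s = s" unfolding s_def by simp
  have s4: "s * s * s * s = (of_nat (\<Prod>i<n. d i))^2"
  proof -
    have "s * s = of_real (sqrt (real (\<Prod>i<n. d i)) * sqrt (real (\<Prod>i<n. d i)))" unfolding s_def
      by (simp only: of_real_mult)
    also have "\<dots> = of_real (real (\<Prod>i<n. d i))" by (simp only: real_sqrt_mult_self abs_of_nat)
    also have "\<dots> = of_nat (\<Prod>i<n. d i)" by (simp only: of_real_of_nat_eq)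
    finally have "s * s = of_nat (\<Prod>i<n. d i)" .
    then show ?thesis by (simp add: power2_eq_square mult.assoc)
  qed
  have T: "?T \<subseteq> {..<2*n}" using assms by auto
  have mK: "merge p j1 j2 \<in> ?K" "merge X k1 k2 \<in> ?K" if "j1 \<in> ?K" "j2 \<in> ?K" "k1 \<in> ?K" "k2 \<in> ?K" for j1 j2 k1 k2
    using that assms by (auto intro: merge_in2)
  have "purity {..<2*n} (dd n d) ?T (choi n d U) =
     (\<Sum>g1\<in>configs {..<2*n} (dd n d). \<Sum>g2\<in>configs {..<2*n} (dd n d).
       choi n d U g1 * cnj (choi n d U (merge ?T g1 g2)) * choi n d U g2 * cnj (choi n d U (merge ?T g2 g1)))"
    by (rule purity_alt[OF T]) simp
  also have "\<dots> = (\<Sum>j1\<in>?K. \<Sum>k1\<in>?K. \<Sum>j2\<in>?K. \<Sum>k2\<in>?K.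
       choi n d U (join n j1 k1) * cnj (choi n d U (join n (merge p j1 j2) (merge X k1 k2))) *
       choi n d U (join n j2 k2) * cnj (choi n d U (join n (merge p j2 j1) (merge X k2 k1))))"
    by (simp add: sum_join merge_join[OF assms])
  also have "\<dots> = (\<Sum>j1\<in>?K. \<Sum>k1\<in>?K. \<Sum>j2\<in>?K. \<Sum>k2\<in>?K.
       (U j1 k1 * cnj (U (merge p j1 j2) (merge X k1 k2)) * U j2 k2 * cnj (U (merge p j2 j1) (merge X k2 k1))) / (of_nat (\<Prod>i<n. d i))^2)"
  proof (intro sum.cong refl)
    fix j1 k1 j2 k2 assume h: "j1 \<in> ?K" "k1 \<in> ?K" "j2 \<in> ?K" "k2 \<in> ?K"
    have cj: "choi n d U (join n j k) = U j k / s" if "j \<in> ?K" "k \<in> ?K" for j k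
      using choi_join[OF that] unfolding s_def .
    show "choi n d U (join n j1 k1) * cnj (choi n d U (join n (merge p j1 j2) (merge X k1 k2))) *
       choi n d U (join n j2 k2) * cnj (choi n d U (join n (merge p j2 j1) (merge X k2 k1))) =
       (U j1 k1 * cnj (U (merge p j1 j2) (merge X k1 k2)) * U j2 k2 * cnj (U (merge p j2 j1) (merge X k2 k1))) / (of_nat (\<Prod>i<n. d i))^2"
      unfolding s4[symmetric] using h mK
      by (simp add: cj cs times_divide_times_eq)
  qed
  also have "\<dots> = (\<Sum>j1\<in>?K. \<Sum>j2\<in>?K. \<Sum>k1\<in>?K. \<Sum>k2\<in>?K.
       (U j1 k1 * cnj (U (merge p j1 j2) (merge X k1 k2)) * U j2 k2 * cnj (U (merge p j2 j1) (merge X k2 k1))) / (of_nat (\<Prod>i<n. d i))^2)"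
    by (rule sum.cong[OF refl], rule sum.swap)
  also have "\<dots> = (\<Sum>j1\<in>?K. \<Sum>j2\<in>?K. \<Sum>k1\<in>?K. \<Sum>k2\<in>?K.
       U j1 k1 * cnj (U (merge p j1 j2) (merge X k1 k2)) * U j2 k2 * cnj (U (merge p j2 j1) (merge X k2 k1)))
     / (of_nat (\<Prod>i<n. d i))^2"
    by (simp add: sum_divide_distrib)
  finally show ?thesis .
qed




lemma configs_lt: "k \<in> configs {..<n} d \<Longrightarrow> i < n \<Longrightarrow> k i < d i"
  unfolding configs_def by (auto simp: PiE_iff)

lemma prod_int:
  assumes H: "\<forall>i<n. haar_state_measure (d i) (\<mu> i)" and n: "0 < n"
    and k: "k1 \<in> configs {..<n} d" "k2 \<in> configs {..<n} d" "k3 \<in> configs {..<n} d" "k4 \<in> configs {..<n} d"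
  shows "integrable (PiM {..<n} \<mu>) (\<lambda>\<psi>s. \<Prod>i<n. \<psi>s i (k1 i) * cnj (\<psi>s i (k2 i)) * \<psi>s i (k3 i) * cnj (\<psi>s i (k4 i)))"
    and "(LINT \<psi>s|PiM {..<n} \<mu>. (\<Prod>i<n. \<psi>s i (k1 i) * cnj (\<psi>s i (k2 i)) * \<psi>s i (k3 i) * cnj (\<psi>s i (k4 i))))
          = (\<Prod>i<n. mom (\<mu> i) (k1 i) (k2 i) (k3 i) (k4 i))"
proof -
  define \<mu>' where "\<mu>' i = (if i < n then \<mu> i else \<mu> 0)" for i
  have H': "haar_state_measure (d (if i < n then i else 0)) (\<mu>' i)" for i
    using H n unfolding \<mu>'_def by auto
  have sf: "\<And>i. sigma_finite_measure (\<mu>' i)"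
    by (rule prob_space_imp_sigma_finite, rule haar.prob[OF haar.intro[OF H']])
  interpret product_sigma_finite \<mu>' by (rule product_sigma_finite.intro[OF sf])
  have eq: "PiM {..<n} \<mu> = PiM {..<n} \<mu>'" by (rule PiM_cong) (auto simp: \<mu>'_def)
  have I: "integrable (\<mu>' i) (\<lambda>v. v (k1 i) * cnj (v (k2 i)) * v (k3 i) * cnj (v (k4 i)))" if "i \<in> {..<n}" for i
  proof -
    have "haar_state_measure (d i) (\<mu>' i)" using H' that by (metis lessThan_iff)
    then show ?thesis using that k by (intro haar.mono_int[OF haar.intro]) (auto intro: configs_lt)
  qed
  show "integrable (PiM {..<n} \<mu>) (\<lambda>\<psi>s. \<Prod>i<n. \<psi>s i (k1 i) * cnj (\<psi>s i (k2 i)) * \<psi>s i (k3 i) * cnj (\<psi>s i (k4 i)))"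
    unfolding eq by (rule product_integrable_prod[OF _ I]) auto
  have "(LINT \<psi>s|PiM {..<n} \<mu>'. (\<Prod>i<n. \<psi>s i (k1 i) * cnj (\<psi>s i (k2 i)) * \<psi>s i (k3 i) * cnj (\<psi>s i (k4 i))))
          = (\<Prod>i<n. mom (\<mu>' i) (k1 i) (k2 i) (k3 i) (k4 i))"
    unfolding mom_def by (rule product_integral_prod[OF _ I]) auto
  also have "\<dots> = (\<Prod>i<n. mom (\<mu> i) (k1 i) (k2 i) (k3 i) (k4 i))"
    by (rule prod.cong) (auto simp: \<mu>'_def)
  finally show "(LINT \<psi>s|PiM {..<n} \<mu>. (\<Prod>i<n. \<psi>s i (k1 i) * cnj (\<psi>s i (k2 i)) * \<psi>s i (k3 i) * cnj (\<psi>s i (k4 i))))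
          = (\<Prod>i<n. mom (\<mu> i) (k1 i) (k2 i) (k3 i) (k4 i))" unfolding eq .
qed

lemma sum4_prod: fixes a b c e :: "'a \<Rightarrow> complex"
  shows "sum a K * sum b K * sum c K * sum e K = (\<Sum>k4\<in>K. \<Sum>k3\<in>K. \<Sum>k2\<in>K. \<Sum>k1\<in>K. a k1 * b k2 * c k3 * e k4)"
  by (simp only: sum_distrib_left sum_distrib_right)

lemma purity_apply: assumes p: "p \<subseteq> {..<n}"
  shows "purity {..<n} d p (apply_op (configs {..<n} d) U (prod_state n \<psi>s)) =
    (\<Sum>g1\<in>configs {..<n} d. \<Sum>g2\<in>configs {..<n} d. \<Sum>k4\<in>configs {..<n} d. \<Sum>k3\<in>configs {..<n} d.
     \<Sum>k2\<in>configs {..<n} d. \<Sum>k1\<in>configs {..<n} d.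
      (U g1 k1 * cnj (U (merge p g1 g2) k2) * U g2 k3 * cnj (U (merge p g2 g1) k4)) *
      (\<Prod>i<n. \<psi>s i (k1 i) * cnj (\<psi>s i (k2 i)) * \<psi>s i (k3 i) * cnj (\<psi>s i (k4 i))))"
  (is "_ = ?rhs")
proof -
  let ?K = "configs {..<n} d"
  let ?\<Phi> = "apply_op ?K U (prod_state n \<psi>s)"
  have "purity {..<n} d p ?\<Phi> = (\<Sum>g1\<in>?K. \<Sum>g2\<in>?K. ?\<Phi> g1 * cnj (?\<Phi> (merge p g1 g2)) * ?\<Phi> g2 * cnj (?\<Phi> (merge p g2 g1)))"
    by (rule purity_alt[OF p]) simp
  also have "\<dots> = (\<Sum>g1\<in>?K. \<Sum>g2\<in>?K. \<Sum>k4\<in>?K. \<Sum>k3\<in>?K. \<Sum>k2\<in>?K. \<Sum>k1\<in>?K.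
      (U g1 k1 * prod_state n \<psi>s k1) * cnj (U (merge p g1 g2) k2 * prod_state n \<psi>s k2) *
      (U g2 k3 * prod_state n \<psi>s k3) * cnj (U (merge p g2 g1) k4 * prod_state n \<psi>s k4))"
    unfolding apply_op_def cnj_sum by (simp only: sum4_prod)
  also have "\<dots> = ?rhs" 
    by (intro sum.cong refl) (simp add: prod_state_def prod.distrib mult_ac)
  finally show ?thesis .
qed

lemma E_purity:
  assumes H: "\<forall>i<n. haar_state_measure (d i) (\<mu> i)" and n: "0 < n" and p: "p \<subseteq> {..<n}"
  shows "integrable (PiM {..<n} \<mu>) (\<lambda>\<psi>s. purity {..<n} d p (apply_op (configs {..<n} d) U (prod_state n \<psi>s)))"
    and "(LINT \<psi>s|PiM {..<n} \<mu>. purity {..<n} d p (apply_op (configs {..<n} d) U (prod_state n \<psi>s))) =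
    (\<Sum>g1\<in>configs {..<n} d. \<Sum>g2\<in>configs {..<n} d. \<Sum>k4\<in>configs {..<n} d. \<Sum>k3\<in>configs {..<n} d.
     \<Sum>k2\<in>configs {..<n} d. \<Sum>k1\<in>configs {..<n} d.
      (U g1 k1 * cnj (U (merge p g1 g2) k2) * U g2 k3 * cnj (U (merge p g2 g1) k4)) *
      (\<Prod>i<n. mom (\<mu> i) (k1 i) (k2 i) (k3 i) (k4 i)))"
proof -
  let ?K = "configs {..<n} d"
  have eq: "(\<lambda>\<psi>s. purity {..<n} d p (apply_op ?K U (prod_state n \<psi>s))) = (\<lambda>\<psi>s.
    (\<Sum>g1\<in>?K. \<Sum>g2\<in>?K. \<Sum>k4\<in>?K. \<Sum>k3\<in>?K. \<Sum>k2\<in>?K. \<Sum>k1\<in>?K.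
      (U g1 k1 * cnj (U (merge p g1 g2) k2) * U g2 k3 * cnj (U (merge p g2 g1) k4)) *
      (\<Prod>i<n. \<psi>s i (k1 i) * cnj (\<psi>s i (k2 i)) * \<psi>s i (k3 i) * cnj (\<psi>s i (k4 i)))))"
    by (rule ext) (rule purity_apply[OF p])
  have I: "integrable (PiM {..<n} \<mu>) (\<lambda>\<psi>s. C * (\<Prod>i<n. \<psi>s i (k1 i) * cnj (\<psi>s i (k2 i)) * \<psi>s i (k3 i) * cnj (\<psi>s i (k4 i))))"
    if "k1 \<in> ?K" "k2 \<in> ?K" "k3 \<in> ?K" "k4 \<in> ?K" for C k1 k2 k3 k4
    by (rule integrable_mult_right, rule prod_int(1)[OF H n that])
  have J: "(LINT \<psi>s|PiM {..<n} \<mu>. C * (\<Prod>i<n. \<psi>s i (k1 i) * cnj (\<psi>s i (k2 i)) * \<psi>s i (k3 i) * cnj (\<psi>s i (k4 i))))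
     = C * (\<Prod>i<n. mom (\<mu> i) (k1 i) (k2 i) (k3 i) (k4 i))"
    if "k1 \<in> ?K" "k2 \<in> ?K" "k3 \<in> ?K" "k4 \<in> ?K" for C k1 k2 k3 k4
    by (simp only: integral_mult_right_zero prod_int(2)[OF H n that])
  show "integrable (PiM {..<n} \<mu>) (\<lambda>\<psi>s. purity {..<n} d p (apply_op (configs {..<n} d) U (prod_state n \<psi>s)))"
    unfolding eq by (simp add: integrable_sum I)
  show "(LINT \<psi>s|PiM {..<n} \<mu>. purity {..<n} d p (apply_op (configs {..<n} d) U (prod_state n \<psi>s))) =
    (\<Sum>g1\<in>configs {..<n} d. \<Sum>g2\<in>configs {..<n} d. \<Sum>k4\<in>configs {..<n} d. \<Sum>k3\<in>configs {..<n} d.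
     \<Sum>k2\<in>configs {..<n} d. \<Sum>k1\<in>configs {..<n} d.
      (U g1 k1 * cnj (U (merge p g1 g2) k2) * U g2 k3 * cnj (U (merge p g2 g1) k4)) *
      (\<Prod>i<n. mom (\<mu> i) (k1 i) (k2 i) (k3 i) (k4 i)))"
    unfolding eq by (simp add: integral_sum integrable_sum I prod_int(2)[OF H n])
qed

lemma prod_ind: "finite A \<Longrightarrow> (\<Prod>i\<in>A. if P i then 1 else (0::complex)) = (if \<forall>i\<in>A. P i then 1 else 0)"
  by (auto simp: prod_zero_iff intro: prod.neutral)

lemma merge_char: assumes X: "X \<subseteq> {..<n}"
  and k: "k1 \<in> configs {..<n} d" "k2 \<in> configs {..<n} d" "k3 \<in> configs {..<n} d" "k4 \<in> configs {..<n} d"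
  shows "((\<forall>i\<in>X. k1 i = k2 i \<and> k3 i = k4 i) \<and> (\<forall>i\<in>{..<n}-X. k1 i = k4 i \<and> k3 i = k2 i)) \<longleftrightarrow>
         (k2 = merge X k1 k3 \<and> k4 = merge X k3 k1)"
proof -
  have ext: "k i = undefined" if "k \<in> configs {..<n} d" "i \<notin> {..<n}" for k i
    using that unfolding configs_def by (auto simp: PiE_iff extensional_def)
  show ?thesis
  proof
    assume h: "(\<forall>i\<in>X. k1 i = k2 i \<and> k3 i = k4 i) \<and> (\<forall>i\<in>{..<n}-X. k1 i = k4 i \<and> k3 i = k2 i)"
    have "k2 i = merge X k1 k3 i \<and> k4 i = merge X k3 k1 i" for i
    proof (cases "i \<in> {..<n}")
      case True then show ?thesis using h unfolding merge_def by auto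
    next
      case False then show ?thesis using X ext[OF k(1) False] ext[OF k(2) False] ext[OF k(3) False] ext[OF k(4) False]
        unfolding merge_def by auto
    qed
    then show "k2 = merge X k1 k3 \<and> k4 = merge X k3 k1" by (auto simp: fun_eq_iff)
  next
    assume "k2 = merge X k1 k3 \<and> k4 = merge X k3 k1"
    then show "(\<forall>i\<in>X. k1 i = k2 i \<and> k3 i = k4 i) \<and> (\<forall>i\<in>{..<n}-X. k1 i = k4 i \<and> k3 i = k2 i)"
      unfolding merge_def by auto
  qed
qed

lemma prod_mom:
  assumes k: "k1 \<in> configs {..<n} d" "k2 \<in> configs {..<n} d" "k3 \<in> configs {..<n} d" "k4 \<in> configs {..<n} d"
  shows "(\<Prod>i<n. ((if k1 i = k2 i \<and> k3 i = k4 i then 1 else 0) + (if k1 i = k4 i \<and> k3 i = k2 i then 1 else 0))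
             / (of_nat (d i) * (of_nat (d i) + 1)))
       = (\<Prod>i<n. 1 / (of_nat (d i) * (of_nat (d i) + 1))) *
         (\<Sum>X\<in>Pow {..<n}. if k2 = merge X k1 k3 \<and> k4 = merge X k3 k1 then 1 else (0::complex))"
proof -
  let ?A = "\<lambda>i. if k1 i = k2 i \<and> k3 i = k4 i then 1 else (0::complex)"
  let ?B = "\<lambda>i. if k1 i = k4 i \<and> k3 i = k2 i then 1 else (0::complex)"
  have "(\<Prod>i<n. (?A i + ?B i) / (of_nat (d i) * (of_nat (d i) + 1)))
      = (\<Prod>i<n. 1 / (of_nat (d i) * (of_nat (d i) + 1))) * (\<Prod>i<n. ?A i + ?B i)"
    by (simp add: prod_dividef)
  also have "(\<Prod>i<n. ?A i + ?B i) = (\<Sum>X\<in>Pow {..<n}. (\<Prod>i\<in>X. ?A i) * (\<Prod>i\<in>{..<n}-X. ?B i))"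
    by (rule prod_add) simp
  also have "\<dots> = (\<Sum>X\<in>Pow {..<n}. if k2 = merge X k1 k3 \<and> k4 = merge X k3 k1 then 1 else 0)"
  proof (rule sum.cong[OF refl])
    fix X assume X: "X \<in> Pow {..<n}"
    have fX: "finite X" using X finite_subset by auto
    show "(\<Prod>i\<in>X. ?A i) * (\<Prod>i\<in>{..<n}-X. ?B i) = (if k2 = merge X k1 k3 \<and> k4 = merge X k3 k1 then 1 else 0)"
    proof -
      have 1: "(\<Prod>i\<in>X. ?A i) = (if \<forall>i\<in>X. k1 i = k2 i \<and> k3 i = k4 i then 1 else 0)" by (rule prod_ind[OF fX])
      have 2: "(\<Prod>i\<in>{..<n}-X. ?B i) = (if \<forall>i\<in>{..<n}-X. k1 i = k4 i \<and> k3 i = k2 i then 1 else 0)"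
        by (rule prod_ind) simp
      have 3: "\<And>P Q. (if P then 1 else 0) * (if Q then 1 else (0::complex)) = (if P \<and> Q then 1 else 0)" by simp
      have mc: "((\<forall>i\<in>X. k1 i = k2 i \<and> k3 i = k4 i) \<and> (\<forall>i\<in>{..<n}-X. k1 i = k4 i \<and> k3 i = k2 i)) \<longleftrightarrow>
         (k2 = merge X k1 k3 \<and> k4 = merge X k3 k1)" using X by (intro merge_char[OF _ k]) auto
      show ?thesis unfolding 1 2 3 mc ..
    qed
  qed
  finally show ?thesis .
qed

lemma delta2: assumes "a \<in> K" "b \<in> K" "finite K"
  shows "(\<Sum>k2\<in>K. \<Sum>k4\<in>K. F k2 k4 * (if k2 = a \<and> k4 = b then 1 else (0::complex))) = F a b"
proof -
  have pw: "F k2 k4 * (if k2 = a \<and> k4 = b then 1 else (0::complex)) = (if k2 = a then (if k4 = b then F k2 k4 else 0) else 0)" for k2 k4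
    by simp
  have "(\<Sum>k2\<in>K. \<Sum>k4\<in>K. F k2 k4 * (if k2 = a \<and> k4 = b then 1 else (0::complex))) =
        (\<Sum>k2\<in>K. \<Sum>k4\<in>K. if k2 = a then (if k4 = b then F k2 k4 else 0) else 0)"
    by (simp only: pw)
  also have "\<dots> = (\<Sum>k2\<in>K. if k2 = a then (\<Sum>k4\<in>K. if k4 = b then F k2 k4 else 0) else 0)"
    by (intro sum.cong refl) simp
  also have "\<dots> = F a b" using assms by simp
  finally show ?thesis .
qed

lemma collapse: assumes X: "X \<subseteq> {..<n}"
  shows "(\<Sum>k4\<in>configs {..<n} d. \<Sum>k3\<in>configs {..<n} d. \<Sum>k2\<in>configs {..<n} d. \<Sum>k1\<in>configs {..<n} d.
           F k1 k2 k3 k4 * (if k2 = merge X k1 k3 \<and> k4 = merge X k3 k1 then 1 else (0::complex)))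
       = (\<Sum>k1\<in>configs {..<n} d. \<Sum>k3\<in>configs {..<n} d. F k1 (merge X k1 k3) k3 (merge X k3 k1))"
proof -
  let ?K = "configs {..<n} d"
  let ?G = "\<lambda>k1 k2 k3 k4. F k1 k2 k3 k4 * (if k2 = merge X k1 k3 \<and> k4 = merge X k3 k1 then 1 else (0::complex))"
  have "(\<Sum>k4\<in>?K. \<Sum>k3\<in>?K. \<Sum>k2\<in>?K. \<Sum>k1\<in>?K. ?G k1 k2 k3 k4) = (\<Sum>k4\<in>?K. \<Sum>k3\<in>?K. \<Sum>k1\<in>?K. \<Sum>k2\<in>?K. ?G k1 k2 k3 k4)"
    by (rule sum.cong[OF refl], rule sum.cong[OF refl], rule sum.swap)
  also have "\<dots> = (\<Sum>k4\<in>?K. \<Sum>k1\<in>?K. \<Sum>k3\<in>?K. \<Sum>k2\<in>?K. ?G k1 k2 k3 k4)"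
    by (rule sum.cong[OF refl], rule sum.swap)
  also have "\<dots> = (\<Sum>k1\<in>?K. \<Sum>k4\<in>?K. \<Sum>k3\<in>?K. \<Sum>k2\<in>?K. ?G k1 k2 k3 k4)"
    by (rule sum.swap)
  also have "\<dots> = (\<Sum>k1\<in>?K. \<Sum>k3\<in>?K. \<Sum>k4\<in>?K. \<Sum>k2\<in>?K. ?G k1 k2 k3 k4)"
    by (rule sum.cong[OF refl], rule sum.swap)
  also have "\<dots> = (\<Sum>k1\<in>?K. \<Sum>k3\<in>?K. \<Sum>k2\<in>?K. \<Sum>k4\<in>?K. ?G k1 k2 k3 k4)"
    by (rule sum.cong[OF refl], rule sum.cong[OF refl], rule sum.swap)
  also have "\<dots> = (\<Sum>k1\<in>?K. \<Sum>k3\<in>?K. F k1 (merge X k1 k3) k3 (merge X k3 k1))"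
  proof (intro sum.cong refl)
    fix k1 k3 assume k: "k1 \<in> ?K" "k3 \<in> ?K"
    have m: "merge X k1 k3 \<in> ?K" "merge X k3 k1 \<in> ?K" using k X by (auto intro: merge_in2)
    show "(\<Sum>k2\<in>?K. \<Sum>k4\<in>?K. ?G k1 k2 k3 k4) = F k1 (merge X k1 k3) k3 (merge X k3 k1)"
      by (rule delta2[OF m configs_finite]) simp
  qed
  finally show ?thesis .
qed

lemma prob_PiM: assumes H: "\<forall>i<n. haar_state_measure (d i) (\<mu> i)" shows "prob_space (PiM {..<n} \<mu>)"
  by (rule prob_space_PiM) (use H in \<open>auto intro: haar.prob[OF haar.intro]\<close>)

lemma aux: assumes "(x::complex) \<noteq> 0" shows "x + 1 \<noteq> 0 \<Longrightarrow> (x/(x+1))/x^2 = 1/(x*(x+1))"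
proof -
  have "(x/(x+1))/x^2 = x / (x * (x*(x+1)))" by (simp add: power2_eq_square mult_ac)
  also have "\<dots> = 1/(x*(x+1))" using assms by (rule nonzero_divide_mult_cancel_left)
  finally show ?thesis .
qed

lemma const_eq: assumes "\<forall>i<n. d i \<ge> 1"
  shows "(\<Prod>i<n. of_nat (d i) / (of_nat (d i) + 1)) / (of_nat (\<Prod>i<n. d i))^2
       = (\<Prod>i<n. 1 / (of_nat (d i) * (of_nat (d i) + 1)) :: complex)"
proof -
  have "(of_nat (\<Prod>i<n. d i) :: complex)^2 = (\<Prod>i<n. (of_nat (d i))^2)"
    by (simp add: of_nat_prod prod_power_distrib)
  then have "(\<Prod>i<n. of_nat (d i) / (of_nat (d i) + 1)) / (of_nat (\<Prod>i<n. d i))^2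
       = (\<Prod>i<n. (of_nat (d i) / (of_nat (d i) + 1)) / (of_nat (d i))^2 :: complex)"
    by (simp only:) (rule prod_dividef[symmetric])
  also have "\<dots> = (\<Prod>i<n. 1 / (of_nat (d i) * (of_nat (d i) + 1)))"
  proof (rule prod.cong[OF refl])
    fix i assume "i \<in> {..<n}"
    then have "d i \<noteq> 0" using assms by auto
    then have nz: "(of_nat (d i) :: complex) \<noteq> 0" by simp
    show "(of_nat (d i) / (of_nat (d i) + 1)) / (of_nat (d i))^2 = 1 / (of_nat (d i) * (of_nat (d i) + (1::complex)))"
    proof -
      have nz1: "(of_nat (d i) :: complex) + 1 \<noteq> 0"
        by (metis of_nat_Suc of_nat_eq_0_iff add.commute nat.distinct(1) plus_1_eq_Suc)
      show ?thesis by (rule aux[OF nz nz1])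
    qed
  qed
  finally show ?thesis .
qed

lemma distrib_aux: "(x::complex) * (c * sum f A) = (\<Sum>a\<in>A. c * (x * f a))"
  by (simp add: sum_distrib_left mult.left_commute)

lemma swap_out4: "(\<Sum>a\<in>A. \<Sum>b\<in>B. \<Sum>c\<in>C. \<Sum>e\<in>E. \<Sum>x\<in>P. f a b c e x) = (\<Sum>x\<in>P. \<Sum>a\<in>A. \<Sum>b\<in>B. \<Sum>c\<in>C. \<Sum>e\<in>E. f a b c e x)"
proof -
  have "(\<Sum>a\<in>A. \<Sum>b\<in>B. \<Sum>c\<in>C. \<Sum>e\<in>E. \<Sum>x\<in>P. f a b c e x) = (\<Sum>a\<in>A. \<Sum>b\<in>B. \<Sum>c\<in>C. \<Sum>x\<in>P. \<Sum>e\<in>E. f a b c e x)"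
    by (rule sum.cong[OF refl], rule sum.cong[OF refl], rule sum.cong[OF refl], rule sum.swap)
  also have "\<dots> = (\<Sum>a\<in>A. \<Sum>b\<in>B. \<Sum>x\<in>P. \<Sum>c\<in>C. \<Sum>e\<in>E. f a b c e x)"
    by (rule sum.cong[OF refl], rule sum.cong[OF refl], rule sum.swap)
  also have "\<dots> = (\<Sum>a\<in>A. \<Sum>x\<in>P. \<Sum>b\<in>B. \<Sum>c\<in>C. \<Sum>e\<in>E. f a b c e x)"
    by (rule sum.cong[OF refl], rule sum.swap)
  also have "\<dots> = (\<Sum>x\<in>P. \<Sum>a\<in>A. \<Sum>b\<in>B. \<Sum>c\<in>C. \<Sum>e\<in>E. f a b c e x)"
    by (rule sum.swap)
  finally show ?thesis .
qed

lemma swap_out2: "(\<Sum>a\<in>A. \<Sum>b\<in>B. \<Sum>x\<in>P. f a b x) = (\<Sum>x\<in>P. \<Sum>a\<in>A. \<Sum>b\<in>B. f a b x)"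
proof -
  have "(\<Sum>a\<in>A. \<Sum>b\<in>B. \<Sum>x\<in>P. f a b x) = (\<Sum>a\<in>A. \<Sum>x\<in>P. \<Sum>b\<in>B. f a b x)"
    by (rule sum.cong[OF refl], rule sum.swap)
  also have "\<dots> = (\<Sum>x\<in>P. \<Sum>a\<in>A. \<Sum>b\<in>B. f a b x)"
    by (rule sum.swap)
  finally show ?thesis .
qed

lemma E_formula:
  assumes H: "\<forall>i<n. haar_state_measure (d i) (\<mu> i)" and n: "0 < n" and p: "p \<subseteq> {..<n}"
  shows "(LINT \<psi>s|PiM {..<n} \<mu>. purity {..<n} d p (apply_op (configs {..<n} d) U (prod_state n \<psi>s))) =
    (\<Prod>i<n. 1 / (of_nat (d i) * (of_nat (d i) + 1))) *
    (\<Sum>X\<in>Pow {..<n}. \<Sum>g1\<in>configs {..<n} d. \<Sum>g2\<in>configs {..<n} d. \<Sum>k1\<in>configs {..<n} d. \<Sum>k3\<in>configs {..<n} d.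
       U g1 k1 * cnj (U (merge p g1 g2) (merge X k1 k3)) * U g2 k3 * cnj (U (merge p g2 g1) (merge X k3 k1)))"
proof -
  let ?K = "configs {..<n} d"
  let ?P = "Pow {..<n}"
  define Cn where "Cn = (\<Prod>i<n. 1 / (of_nat (d i) * (of_nat (d i) + 1)) :: complex)"
  define co where "co g1 g2 k1 k2 k3 k4 = U g1 k1 * cnj (U (merge p g1 g2) k2) * U g2 k3 * cnj (U (merge p g2 g1) k4)" for g1 g2 k1 k2 k3 k4
  define ind where "ind X k1 k2 k3 k4 = (if k2 = merge X k1 k3 \<and> k4 = merge X k3 k1 then 1 else (0::complex))" for X k1 k2 k3 k4
  have "(LINT \<psi>s|PiM {..<n} \<mu>. purity {..<n} d p (apply_op ?K U (prod_state n \<psi>s))) =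
    (\<Sum>g1\<in>?K. \<Sum>g2\<in>?K. \<Sum>k4\<in>?K. \<Sum>k3\<in>?K. \<Sum>k2\<in>?K. \<Sum>k1\<in>?K.
      co g1 g2 k1 k2 k3 k4 * (\<Prod>i<n. mom (\<mu> i) (k1 i) (k2 i) (k3 i) (k4 i)))"
    unfolding co_def by (rule E_purity(2)[OF H n p])
  also have "\<dots> = (\<Sum>g1\<in>?K. \<Sum>g2\<in>?K. \<Sum>k4\<in>?K. \<Sum>k3\<in>?K. \<Sum>k2\<in>?K. \<Sum>k1\<in>?K.
      co g1 g2 k1 k2 k3 k4 * (Cn * (\<Sum>X\<in>?P. ind X k1 k2 k3 k4)))"
  proof (intro sum.cong refl)
    fix g1 g2 k1 k2 k3 k4 assume k: "k4 \<in> ?K" "k3 \<in> ?K" "k2 \<in> ?K" "k1 \<in> ?K"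
    have "(\<Prod>i<n. mom (\<mu> i) (k1 i) (k2 i) (k3 i) (k4 i)) =
      (\<Prod>i<n. ((if k1 i = k2 i \<and> k3 i = k4 i then 1 else 0) + (if k1 i = k4 i \<and> k3 i = k2 i then 1 else 0))
             / (of_nat (d i) * (of_nat (d i) + 1)))"
    proof (rule prod.cong[OF refl])
      fix i assume i: "i \<in> {..<n}"
      then have Hi: "haar (d i) (\<mu> i)" using H by (auto intro: haar.intro)
      show "mom (\<mu> i) (k1 i) (k2 i) (k3 i) (k4 i) = ((if k1 i = k2 i \<and> k3 i = k4 i then 1 else 0) + (if k1 i = k4 i \<and> k3 i = k2 i then 1 else 0))
             / (of_nat (d i) * (of_nat (d i) + 1))"
        using i k by (intro haar.moment[OF Hi]) (auto intro: configs_lt)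
    qed
    also have "\<dots> = Cn * (\<Sum>X\<in>?P. ind X k1 k2 k3 k4)"
      unfolding Cn_def ind_def by (rule prod_mom[OF k(4,3,2,1)])
    finally show "co g1 g2 k1 k2 k3 k4 * (\<Prod>i<n. mom (\<mu> i) (k1 i) (k2 i) (k3 i) (k4 i)) =
       co g1 g2 k1 k2 k3 k4 * (Cn * (\<Sum>X\<in>?P. ind X k1 k2 k3 k4))" by simp
  qed
  also have "\<dots> = (\<Sum>g1\<in>?K. \<Sum>g2\<in>?K. Cn * (\<Sum>X\<in>?P. \<Sum>k1\<in>?K. \<Sum>k3\<in>?K. co g1 g2 k1 (merge X k1 k3) k3 (merge X k3 k1)))"
  proof (intro sum.cong refl)
    fix g1 g2
    have "(\<Sum>k4\<in>?K. \<Sum>k3\<in>?K. \<Sum>k2\<in>?K. \<Sum>k1\<in>?K. co g1 g2 k1 k2 k3 k4 * (Cn * (\<Sum>X\<in>?P. ind X k1 k2 k3 k4)))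
       = (\<Sum>k4\<in>?K. \<Sum>k3\<in>?K. \<Sum>k2\<in>?K. \<Sum>k1\<in>?K. \<Sum>X\<in>?P. Cn * (co g1 g2 k1 k2 k3 k4 * ind X k1 k2 k3 k4))"
      by (intro sum.cong refl distrib_aux)
    also have "\<dots> = (\<Sum>X\<in>?P. \<Sum>k4\<in>?K. \<Sum>k3\<in>?K. \<Sum>k2\<in>?K. \<Sum>k1\<in>?K. Cn * (co g1 g2 k1 k2 k3 k4 * ind X k1 k2 k3 k4))"
      by (rule swap_out4)
    also have "\<dots> = (\<Sum>X\<in>?P. Cn * (\<Sum>k4\<in>?K. \<Sum>k3\<in>?K. \<Sum>k2\<in>?K. \<Sum>k1\<in>?K. co g1 g2 k1 k2 k3 k4 * ind X k1 k2 k3 k4))"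
      by (simp only: sum_distrib_left)
    also have "\<dots> = (\<Sum>X\<in>?P. Cn * (\<Sum>k1\<in>?K. \<Sum>k3\<in>?K. co g1 g2 k1 (merge X k1 k3) k3 (merge X k3 k1)))"
      unfolding ind_def by (rule sum.cong[OF refl], rule arg_cong[where f="\<lambda>x. Cn * x"], rule collapse) auto
    also have "\<dots> = Cn * (\<Sum>X\<in>?P. \<Sum>k1\<in>?K. \<Sum>k3\<in>?K. co g1 g2 k1 (merge X k1 k3) k3 (merge X k3 k1))"
      by (simp only: sum_distrib_left)
    finally show "(\<Sum>k4\<in>?K. \<Sum>k3\<in>?K. \<Sum>k2\<in>?K. \<Sum>k1\<in>?K. co g1 g2 k1 k2 k3 k4 * (Cn * (\<Sum>X\<in>?P. ind X k1 k2 k3 k4)))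
       = Cn * (\<Sum>X\<in>?P. \<Sum>k1\<in>?K. \<Sum>k3\<in>?K. co g1 g2 k1 (merge X k1 k3) k3 (merge X k3 k1))" .
  qed
  also have "\<dots> = Cn * (\<Sum>g1\<in>?K. \<Sum>g2\<in>?K. \<Sum>X\<in>?P. \<Sum>k1\<in>?K. \<Sum>k3\<in>?K. co g1 g2 k1 (merge X k1 k3) k3 (merge X k3 k1))"
    by (simp only: sum_distrib_left)
  also have "\<dots> = Cn * (\<Sum>X\<in>?P. \<Sum>g1\<in>?K. \<Sum>g2\<in>?K. \<Sum>k1\<in>?K. \<Sum>k3\<in>?K. co g1 g2 k1 (merge X k1 k3) k3 (merge X k3 k1))"
    by (rule arg_cong[where f="\<lambda>x. Cn * x"], rule swap_out2)
  finally show ?thesis unfolding Cn_def co_def .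
qed

lemma nontriv_fin: "finite (nontriv_bip n)"
  unfolding nontriv_bip_def by (rule finite_subset[of _ "Pow {1..<n}"]) auto

theorem theorem4:
  fixes n :: nat and d :: "nat \<Rightarrow> nat"
    and U :: "(nat \<Rightarrow> nat) \<Rightarrow> (nat \<Rightarrow> nat) \<Rightarrow> complex"
    and \<mu> :: "nat \<Rightarrow> (nat \<Rightarrow> complex) measure"
  assumes "n \<ge> 2"
    and "\<forall>i<n. d i \<ge> 1"
    and "unitary_on (configs {..<n} d) U"
    and "\<forall>i<n. haar_state_measure (d i) (\<mu> i)"
  shows "eps1 n d U \<mu> = (1 / (2 ^ (n - 1) - 1)) * (\<Sum>p\<in>nontriv_bip n. eps_bip n d U \<mu> p)
         \<and> (\<forall>p\<in>nontriv_bip n. eps_bip n d U \<mu> p =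
           2 * (1 - (\<Prod>i<n. of_nat (d i) / (of_nat (d i) + 1)) *
                 (\<Sum>X\<in>Pow {..<n}. purity {..<2 * n} (dd n d) (p \<union> (\<lambda>i. i + n) ` X) (choi n d U))))"
proof -
  have n0: "0 < n" using assms(1) by simp
  note H = assms(4)
  let ?K = "configs {..<n} d"
  let ?M = "PiM {..<n} \<mu>"
  let ?\<Phi> = "\<lambda>\<psi>s. apply_op ?K U (prod_state n \<psi>s)"
  interpret P: prob_space ?M by (rule prob_PiM[OF H])
  have pin: "p \<subseteq> {..<n}" if "p \<in> nontriv_bip n" for p using that unfolding nontriv_bip_def by auto
  have pint: "integrable ?M (\<lambda>\<psi>s. purity {..<n} d p (?\<Phi> \<psi>s))" if "p \<in> nontriv_bip n" for p
    by (rule E_purity(1)[OF H n0 pin[OF that]])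
  have tint: "integrable ?M (\<lambda>\<psi>s. tau_bip n d p (?\<Phi> \<psi>s))" if "p \<in> nontriv_bip n" for p
    unfolding tau_bip_def by (rule integrable_mult_right, rule Bochner_Integration.integrable_diff[OF P.integrable_const pint[OF that]])
  have eps_val: "eps_bip n d U \<mu> p = 2 * (1 - (LINT \<psi>s|?M. purity {..<n} d p (?\<Phi> \<psi>s)))"
    if "p \<in> nontriv_bip n" for p
  proof -
    have "eps_bip n d U \<mu> p = 2 * (LINT \<psi>s|?M. 1 - purity {..<n} d p (?\<Phi> \<psi>s))"
      unfolding eps_bip_def tau_bip_def by (rule integral_mult_right_zero)
    also have "(LINT \<psi>s|?M. 1 - purity {..<n} d p (?\<Phi> \<psi>s)) = (LINT \<psi>s|?M. 1) - (LINT \<psi>s|?M. purity {..<n} d p (?\<Phi> \<psi>s))"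
      by (rule Bochner_Integration.integral_diff[OF P.integrable_const pint[OF that]])
    also have "(LINT \<psi>s|?M. (1::complex)) = 1" by (simp add: P.prob_space)
    finally show ?thesis .
  qed
  show ?thesis
  proof
    have "eps1 n d U \<mu> = (1 / (2 ^ (n - 1) - 1)) * (LINT \<psi>s|?M. (\<Sum>p\<in>nontriv_bip n. tau_bip n d p (?\<Phi> \<psi>s)))"
      unfolding eps1_def tau1_def by (rule integral_mult_right_zero)
    also have "(LINT \<psi>s|?M. (\<Sum>p\<in>nontriv_bip n. tau_bip n d p (?\<Phi> \<psi>s))) = (\<Sum>p\<in>nontriv_bip n. eps_bip n d U \<mu> p)"
      unfolding eps_bip_def by (rule Bochner_Integration.integral_sum[OF tint])
    finally show "eps1 n d U \<mu> = (1 / (2 ^ (n - 1) - 1)) * (\<Sum>p\<in>nontriv_bip n. eps_bip n d U \<mu> p)" .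
  next
    show "\<forall>p\<in>nontriv_bip n. eps_bip n d U \<mu> p =
           2 * (1 - (\<Prod>i<n. of_nat (d i) / (of_nat (d i) + 1)) *
                 (\<Sum>X\<in>Pow {..<n}. purity {..<2 * n} (dd n d) (p \<union> (\<lambda>i. i + n) ` X) (choi n d U)))"
    proof
      fix p assume p: "p \<in> nontriv_bip n"
      let ?Q = "\<lambda>X. (\<Sum>g1\<in>?K. \<Sum>g2\<in>?K. \<Sum>k1\<in>?K. \<Sum>k3\<in>?K.
       U g1 k1 * cnj (U (merge p g1 g2) (merge X k1 k3)) * U g2 k3 * cnj (U (merge p g2 g1) (merge X k3 k1)))"
      have "(\<Prod>i<n. of_nat (d i) / (of_nat (d i) + 1)) *
                 (\<Sum>X\<in>Pow {..<n}. purity {..<2 * n} (dd n d) (p \<union> (\<lambda>i. i + n) ` X) (choi n d U))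
          = (\<Prod>i<n. of_nat (d i) / (of_nat (d i) + 1)) * (\<Sum>X\<in>Pow {..<n}. ?Q X / (of_nat (\<Prod>i<n. d i))^2)"
        by (intro arg_cong[where f="\<lambda>x. (\<Prod>i<n. of_nat (d i) / (of_nat (d i) + 1)) * x"] sum.cong refl purity_choi pin[OF p]) auto
      also have "\<dots> = ((\<Prod>i<n. of_nat (d i) / (of_nat (d i) + 1)) / (of_nat (\<Prod>i<n. d i))^2) * (\<Sum>X\<in>Pow {..<n}. ?Q X)"
        by (simp add: sum_divide_distrib[symmetric])
      also have "\<dots> = (\<Prod>i<n. 1 / (of_nat (d i) * (of_nat (d i) + 1))) * (\<Sum>X\<in>Pow {..<n}. ?Q X)"
        by (simp only: const_eq[OF assms(2)])
      also have "\<dots> = (LINT \<psi>s|?M. purity {..<n} d p (?\<Phi> \<psi>s))"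
        by (rule E_formula[OF H n0 pin[OF p], symmetric])
      finally show "eps_bip n d U \<mu> p =
           2 * (1 - (\<Prod>i<n. of_nat (d i) / (of_nat (d i) + 1)) *
                 (\<Sum>X\<in>Pow {..<n}. purity {..<2 * n} (dd n d) (p \<union> (\<lambda>i. i + n) ` X) (choi n d U)))"
        using eps_val[OF p] by simp
    qed
  qed
qed


end
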